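(* Let $X$ be a real Banach space with a normalized boundedly complete basis $\mathcal B=(e_n)_{n=1}^\infty$ with biorthogonal functionals $(e_n^* )$, and let $\mathcal E=(\varepsilon_n)_{n=1}^\infty$ be a sequence of nonnegative numbers. If the brick $K_{\mathcal B,\mathcal E}$ is norm-bounded, then it contains an extreme point.
   Context: The brick is $K_{\mathcal B,\mathcal E}=\{x\in X:\ |e_n^*(x)|\le\varepsilon_n \text{ for all } n\}$. A basis is boundedly complete if for every scalar sequence $(a_n)$, $\sup_n\|\sum_{k=1}^na_ke_k\|<\infty$ implies convergence of $\sum_n a_ne_n$. A point $x_0\in A$ is an extreme point of $A$ if for every nonzero $x\in X$ there is $\lambda\in[-1,1]$ with $x_0+\lambda x\notin A$. *)

theory Defs
  imports "HOL-Analysis.Analysis"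
begin

text \<open>A Schauder basis (indexed from 0): every vector has a unique norm-convergent expansion.\<close>
definition schauder_basis :: "(nat \<Rightarrow> 'a::real_normed_vector) \<Rightarrow> bool" where
  "schauder_basis e \<longleftrightarrow> (\<forall>x. \<exists>!a. (\<lambda>n. a n *\<^sub>R e n) sums x)"

definition biorthogonal_functionals ::
  "(nat \<Rightarrow> 'a::real_normed_vector) \<Rightarrow> (nat \<Rightarrow> 'a \<Rightarrow> real) \<Rightarrow> bool" where
  "biorthogonal_functionals e estar \<longleftrightarrow> (\<forall>x. (\<lambda>n. estar n x *\<^sub>R e n) sums x)"

definition normalized_basis :: "(nat \<Rightarrow> 'a::real_normed_vector) \<Rightarrow> bool" where
  "normalized_basis e \<longleftrightarrow> (\<forall>n. norm (e n) = 1)"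

definition boundedly_complete :: "(nat \<Rightarrow> 'a::real_normed_vector) \<Rightarrow> bool" where
  "boundedly_complete e \<longleftrightarrow>
     (\<forall>a::nat \<Rightarrow> real. bounded (range (\<lambda>n. \<Sum>k<n. a k *\<^sub>R e k))
        \<longrightarrow> summable (\<lambda>n. a n *\<^sub>R e n))"

definition brick :: "(nat \<Rightarrow> 'a \<Rightarrow> real) \<Rightarrow> (nat \<Rightarrow> real) \<Rightarrow> 'a set" where
  "brick estar eps = {x. \<forall>n. \<bar>estar n x\<bar> \<le> eps n}"

definition is_extreme_point :: "'a::real_vector \<Rightarrow> 'a set \<Rightarrow> bool" where
  "is_extreme_point x0 A \<longleftrightarrow> x0 \<in> A \<and>
     (\<forall>x. x \<noteq> 0 \<longrightarrow> (\<exists>t\<in>{-1..1::real}. x0 + t *\<^sub>R x \<notin> A))"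

end

theory Submission
  imports Defs
begin

lemma coef_unique:
  assumes sb: "schauder_basis e" and bf: "biorthogonal_functionals e estar"
    and s: "(\<lambda>n. a n *\<^sub>R e n) sums x"
  shows "estar n x = a n"
proof -
  from sb obtain b where "\<forall>c. (\<lambda>n. c n *\<^sub>R e n) sums x \<longrightarrow> c = b"
    unfolding schauder_basis_def by metis
  moreover have "(\<lambda>n. estar n x *\<^sub>R e n) sums x" using bf unfolding biorthogonal_functionals_def by blast
  ultimately have "(\<lambda>n. estar n x) = a" using s by metis
  thus ?thesis by metis
qed

theorem proposition2p10:
  fixes e :: "nat \<Rightarrow> 'a::banach"
    and estar :: "nat \<Rightarrow> 'a \<Rightarrow> real"
    and eps :: "nat \<Rightarrow> real"
  assumes "schauder_basis e"
    and "biorthogonal_functionals e estar"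
    and "normalized_basis e"
    and "boundedly_complete e"
    and "\<forall>n. eps n \<ge> 0"
    and "bounded (brick estar eps)"
  shows "\<exists>x0. is_extreme_point x0 (brick estar eps)"
proof -
  note sb = assms(1) and bf = assms(2)
  have part: "(\<Sum>k<N. eps k *\<^sub>R e k) \<in> brick estar eps" for N
  proof -
    let ?a = "\<lambda>k. if k < N then eps k else 0"
    have "(\<lambda>k. ?a k *\<^sub>R e k) sums (\<Sum>k<N. ?a k *\<^sub>R e k)"
      by (rule sums_finite) auto
    moreover have "(\<Sum>k<N. ?a k *\<^sub>R e k) = (\<Sum>k<N. eps k *\<^sub>R e k)" by simp
    ultimately have "(\<lambda>k. ?a k *\<^sub>R e k) sums (\<Sum>k<N. eps k *\<^sub>R e k)" by simp
    hence "estar n (\<Sum>k<N. eps k *\<^sub>R e k) = ?a n" for n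
      by (rule coef_unique[OF sb bf])
    thus ?thesis using assms(5) unfolding brick_def by auto
  qed
  have "bounded (range (\<lambda>N. \<Sum>k<N. eps k *\<^sub>R e k))"
    using part by (meson assms(6) bounded_subset image_subset_iff)
  hence "summable (\<lambda>n. eps n *\<^sub>R e n)" using assms(4) unfolding boundedly_complete_def by blast
  then obtain x0 where s0: "(\<lambda>n. eps n *\<^sub>R e n) sums x0" by (auto simp: summable_def)
  have c0: "estar n x0 = eps n" for n by (rule coef_unique[OF sb bf s0])
  have inb: "x0 \<in> brick estar eps" using c0 assms(5) unfolding brick_def by auto
  have "is_extreme_point x0 (brick estar eps)"
    unfolding is_extreme_point_def
  proof (intro conjI inb allI impI)
    fix x :: 'a assume "x \<noteq> 0"
    have sx: "(\<lambda>n. estar n x *\<^sub>R e n) sums x" using bf unfolding biorthogonal_functionals_def by blast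
    obtain n where nz: "estar n x \<noteq> 0"
    proof (rule ccontr)
      assume "\<not> thesis"
      hence "\<forall>n. estar n x = 0" using that by blast
      hence "(\<lambda>n. estar n x *\<^sub>R e n) sums 0" by simp
      with sx have "x = 0" using sums_unique2 by blast
      with \<open>x \<noteq> 0\<close> show False by simp
    qed
    define t :: real where "t = sgn (estar n x)"
    have t: "t \<in> {-1..1}" "t * estar n x > 0" using nz by (auto simp: t_def sgn_real_def)
    have "(\<lambda>k. (eps k + t * estar k x) *\<^sub>R e k) sums (x0 + t *\<^sub>R x)"
      using sums_add[OF s0 sums_scaleR_right[OF sx, of t]] by (simp add: algebra_simps)
    hence "estar n (x0 + t *\<^sub>R x) = eps n + t * estar n x" by (rule coef_unique[OF sb bf])
    hence "\<not> \<bar>estar n (x0 + t *\<^sub>R x)\<bar> \<le> eps n" using t by linarith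
    hence "x0 + t *\<^sub>R x \<notin> brick estar eps" unfolding brick_def by blast
    thus "\<exists>t\<in>{-1..1::real}. x0 + t *\<^sub>R x \<notin> brick estar eps" using t by blast
  qed
  thus ?thesis by blast
qed

end
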